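(* Let $n\geq1$ be an integer and $z\in\mathbb{C}$ with $|z|<1$ and $|1-z|\left(n+\frac12\right)<1$. Then \[ \left|\sum_{k=n+1}^\infty\frac{z^k}{k}\right|< |z|^{n+1}\left(-\log\left(|1-z|\left(n+\frac{1}{2}\right)\right)+C_3\right),\qquad C_3=\sqrt{(\pi/2)^2+1}. \] *)

theory Defs
  imports "HOL-Analysis.Analysis"
begin

end

theory Submission
  imports Defs
begin

lemma ln_gap:
  fixes y :: real assumes "0 \<le> y" "y < 1"
  shows "2 * y \<le> ln (1 + y) - ln (1 - y)"
proof -
  let ?g = "\<lambda>x::real. ln (1 + x) - ln (1 - x) - 2 * x"
  have "?g 0 \<le> ?g y"
  proof (rule DERIV_nonneg_imp_increasing_open[OF assms(1)])
    fix x assume x: "0 < x" "x < y"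
    have p1: "1 - x > 0" "1 + x > 0" using x assms by auto
    have "(?g has_real_derivative (1/(1+x) - (-1)/(1-x) - 2*1)) (at x)"
      using p1 by (intro derivative_eq_intros refl) auto
    then have "(?g has_real_derivative (1/(1+x) + 1/(1-x) - 2)) (at x)" by simp
    moreover have "1/(1+x) + 1/(1-x) - 2 \<ge> 0"
    proof -
      have "1/(1+x) + 1/(1-x) - 2 = 2*x^2/((1+x)*(1-x))"
        using p1 by (simp add: divide_simps power2_eq_square) (simp add: algebra_simps)
      also have "\<dots> \<ge> 0" using p1 by simp
      finally show ?thesis .
    qed
    ultimately show "\<exists>d. (?g has_real_derivative d) (at x) \<and> d \<ge> 0" by blast
  next
    show "continuous_on {0..y} ?g"
      using assms by (auto intro!: continuous_intros)
  qed
  then show ?thesis by simp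
qed

lemma recip_le_ln:
  fixes j :: real assumes "j \<ge> 1"
  shows "1 / j \<le> ln (j + 1/2) - ln (j - 1/2)"
proof -
  have "2 * (1/(2*j)) \<le> ln (1 + 1/(2*j)) - ln (1 - 1/(2*j))"
    using assms by (intro ln_gap) (auto simp: field_simps)
  also have "1 + 1/(2*j) = (j + 1/2) / j" using assms by (simp add: field_simps)
  also have "ln ((j + 1/2) / j) = ln (j + 1/2) - ln j"
    using assms by (intro ln_divide_pos) auto
  also have "1 - 1/(2*j) = (j - 1/2) / j" using assms by (simp add: field_simps)
  also have "ln ((j - 1/2) / j) = ln (j - 1/2) - ln j"
    using assms by (intro ln_divide_pos) auto
  finally show ?thesis using assms by simp
qed

lemma head_bound:
  fixes m :: nat assumes "m \<ge> 1"
  shows "(\<Sum>k<N. 1 / real (k + m)) \<le> ln (real (N + m) - 1/2) - ln (real m - 1/2)"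
proof (induction N)
  case 0 then show ?case by simp
next
  case (Suc N)
  have "1 / real (N + m) \<le> ln (real (N + m) + 1/2) - ln (real (N + m) - 1/2)"
    using assms by (intro recip_le_ln) auto
  then show ?case using Suc by (simp add: algebra_simps)
qed

lemma final_real:
  fixes r X m :: real
  assumes "r > 0" "r * (m - 1/2) < 1" "m \<ge> 2" "X \<ge> 2 / r" "X < 2 / r + 1"
  shows "ln (X - 1/2) - ln (m - 1/2) + 2 / (r * X) < - ln (r * (m - 1/2)) + sqrt ((pi/2)^2 + 1)"
proof -
  have "r * (3/2) \<le> r * (m - 1/2)" using assms(1,3) by (intro mult_left_mono) auto
  then have r23: "r < 2/3" using assms(2) by simp
  define u where "u = r * X"
  have u2: "u \<ge> 2" using assms(1,4) by (simp add: u_def field_simps)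
  have u3: "u < 2 + r" using assms(1,5) by (simp add: u_def field_simps)
  have "2/r > 3" using r23 assms(1) by (simp add: field_simps)
  then have Xpos: "X - 1/2 > 0" using assms(4) by simp
  have mpos: "m - 1/2 > 0" using assms by simp
  have e1: "ln (X - 1/2) - ln (m - 1/2) = ln (r * (X - 1/2)) - ln (r * (m - 1/2))"
    using assms(1) Xpos mpos by (simp add: ln_mult_pos)
  have v: "r * (X - 1/2) = u - r/2" by (simp add: u_def algebra_simps)
  have "ln (u - r/2) = ln 2 + ln ((u - r/2)/2)"
    using u2 r23 by (subst ln_mult_pos[symmetric]) auto
  also have "ln ((u - r/2)/2) \<le> (u - r/2)/2 - 1"
    using u2 r23 by (intro ln_le_minus_one) auto
  finally have l1: "ln (u - r/2) \<le> ln 2 + (u - r/2)/2 - 1" by simp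
  have l2: "(u - r/2)/2 - 1 + 2 / u \<le> 1"
  proof -
    have "(u-2)*(u-2) \<le> r * (u-2)" using u2 u3 by (intro mult_right_mono) auto
    also have "r * (u - 2) \<le> r * (u/2)" using u3 r23 assms(1) by (intro mult_left_mono) auto
    finally have "(u-2)*(u-2) \<le> r * (u/2)" .
    then have "((u-2)*(u-2) - r*(u/2)) / (2*u) \<le> 0" using u2
      by (intro divide_nonpos_pos) auto
    moreover have "(u - r/2)/2 - 1 + 2/u = ((u-2)*(u-2) - r*(u/2)) / (2*u) + 1"
      using u2 by (simp add: field_simps power2_eq_square)
    ultimately show ?thesis by linarith
  qed
  have ln2: "ln (2::real) \<le> 25/36" by (rule ln2_le_25_over_36)
  have pi3: "pi > 3" by (rule pi_gt3)
  have s1: "sqrt ((pi/2)^2 + 1) > sqrt (13/4)"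
  proof (rule real_sqrt_less_mono)
    have "(3/2::real)^2 < (pi/2)^2" using pi3 by (intro power_strict_mono) auto
    then show "13/4 < (pi/2)^2 + 1" by (simp add: power2_eq_square)
  qed
  moreover have "sqrt (13/4) \<ge> (1.8::real)"
    by (rule real_le_rsqrt) (simp add: power2_eq_square)
  ultimately have c3: "sqrt ((pi/2)^2 + 1) > 1.8" by linarith
  have "ln (X - 1/2) - ln (m - 1/2) + 2 / (r * X) = ln (u - r/2) + 2/u - ln (r * (m - 1/2))"
    using e1 v by (simp add: u_def)
  also have "\<dots> \<le> ln 2 + 1 - ln (r * (m - 1/2))" using l1 l2 by simp
  also have "\<dots> < - ln (r * (m - 1/2)) + sqrt ((pi/2)^2 + 1)" using ln2 c3 by simp
  finally show ?thesis .
qed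

lemma summable_w:
  fixes z :: complex and M :: nat assumes "norm z < 1"
  shows "summable (\<lambda>k. z ^ k / of_nat (k + M))"
proof (rule summable_comparison_test[OF _ summable_geometric[of "norm z"]])
  show "\<exists>N. \<forall>k\<ge>N. norm (z ^ k / of_nat (k + M)) \<le> norm z ^ k"
  proof (intro exI allI impI)
    fix k :: nat assume "k \<ge> 1"
    then have "real (k + M) \<ge> 1" by simp
    then have "norm z ^ k / real (k + M) \<le> norm z ^ k / 1"
      by (intro divide_left_mono) auto
    moreover have "norm (z ^ k / of_nat (k + M)) = norm z ^ k / real (k + M)"
      by (simp only: norm_divide norm_power norm_of_nat)
    ultimately show "norm (z ^ k / of_nat (k + M)) \<le> norm z ^ k" by simp
  qed
qed (use assms in auto)

lemma tail_bound:
  fixes z :: complex and M :: nat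
  assumes z1: "norm z < 1" and M: "M \<ge> 1"
  shows "norm (1 - z) * norm (\<Sum>k. z ^ k / of_nat (k + M)) \<le> 2 / real M"
proof -
  define a where "a k = 1 / real (k + M)" for k
  define w where "w k = z ^ k / of_nat (k + M)" for k
  have sw: "summable w" unfolding w_def by (rule summable_w[OF z1])
  have a_lim: "a \<longlonglongrightarrow> 0"
    unfolding a_def using LIMSEQ_ignore_initial_segment[OF lim_1_over_n, of M]
    by simp
  have tel: "(\<lambda>k. a k - a (Suc k)) sums (a 0 - 0)"
    by (rule telescope_sums'[OF a_lim])
  have a_dec: "a (Suc k) \<le> a k" for k
    using M unfolding a_def by (simp add: frac_le)
  have wS: "w (Suc k) - z * w k = z ^ Suc k * of_real (a (Suc k) - a k)" for k
  proof -
    have wa: "w j = z ^ j * of_real (a j)" for j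
      unfolding w_def a_def by (simp add: divide_inverse of_real_inverse)
    show ?thesis unfolding wa by (simp add: algebra_simps)
  qed
  have nb: "norm (w (Suc k) - z * w k) \<le> a k - a (Suc k)" for k
  proof -
    have "norm (w (Suc k) - z * w k) = norm z ^ Suc k * (a k - a (Suc k))"
      using a_dec[of k] by (simp add: wS norm_mult norm_power del: of_real_diff)
    also have "\<dots> \<le> 1 * (a k - a (Suc k))"
      using a_dec[of k] z1 by (intro mult_right_mono power_le_one) auto
    finally show ?thesis by simp
  qed
  have sn: "summable (\<lambda>k. norm (w (Suc k) - z * w k))"
    by (rule summable_comparison_test[OF _ sums_summable[OF tel]]) (use nb in auto)
  have h1: "suminf w = w 0 + (\<Sum>k. w (Suc k))" using suminf_split_head[OF sw] by simp
  have h2: "z * suminf w = (\<Sum>k. z * w k)" using suminf_mult[OF sw] by simp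
  have h3: "(\<Sum>k. w (Suc k)) - (\<Sum>k. z * w k) = (\<Sum>k. w (Suc k) - z * w k)"
    using suminf_diff[OF summable_Suc_iff[THEN iffD2, OF sw] summable_mult[OF sw, of z]] by simp
  have "(1 - z) * suminf w = suminf w - z * suminf w" by (simp add: algebra_simps)
  also have "\<dots> = w 0 + (\<Sum>k. w (Suc k) - z * w k)"
    by (subst h2, subst (1) h1, subst h3[symmetric]) simp
  finally have eq: "(1 - z) * suminf w = w 0 + (\<Sum>k. w (Suc k) - z * w k)" .
  have "norm (\<Sum>k. w (Suc k) - z * w k) \<le> (\<Sum>k. norm (w (Suc k) - z * w k))"
    by (rule summable_norm[OF sn])
  also have "\<dots> \<le> (\<Sum>k. a k - a (Suc k))"
    by (rule suminf_le[OF nb sn sums_summable[OF tel]])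
  also have "\<dots> = a 0" using sums_unique[OF tel] by simp
  finally have n1: "norm (\<Sum>k. w (Suc k) - z * w k) \<le> a 0" .
  have n0: "norm (w 0) = a 0" unfolding w_def a_def by (simp add: norm_divide)
  have "norm ((1 - z) * suminf w) \<le> a 0 + a 0"
    unfolding eq using norm_triangle_ineq[of "w 0" "\<Sum>k. w (Suc k) - z * w k"] n0 n1 by linarith
  then show ?thesis unfolding a_def w_def by (simp add: norm_mult)
qed

theorem theorem7:
  fixes n :: nat and z :: complex
  assumes "n \<ge> 1"
    and "norm z < 1"
    and "norm (1 - z) * (real n + 1/2) < 1"
  shows "norm (\<Sum>k. z ^ (k + n + 1) / of_nat (k + n + 1))
           < norm z ^ (n + 1) * (- ln (norm (1 - z) * (real n + 1/2)) + sqrt ((pi/2)^2 + 1))"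
proof -
  define m where "m = n + 1"
  define r where "r = norm (1 - z)"
  have m2: "m \<ge> 2" using assms(1) by (simp add: m_def)
  have rm: "r * (real m - 1/2) < 1" using assms(3) by (simp add: r_def m_def add.commute)
  have z0: "z \<noteq> 0"
  proof
    assume "z = 0"
    then show False using assms(3,1) by simp
  qed
  have z1: "z \<noteq> 1" using assms(2) by auto
  have rpos: "r > 0" using z1 by (simp add: r_def)
  define c where "c k = z ^ k / of_nat (k + m)" for k
  have sc: "summable c" unfolding c_def by (rule summable_w[OF assms(2)])
  have "(\<lambda>k. z ^ (k + n + 1) / of_nat (k + n + 1)) = (\<lambda>k. z ^ m * c k)"
    by (auto simp: c_def m_def power_add algebra_simps)
  then have Seq: "(\<Sum>k. z ^ (k + n + 1) / of_nat (k + n + 1)) = z ^ m * suminf c"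
    using suminf_mult[OF sc] by simp
  have "r * (3/2) \<le> r * (real m - 1/2)" using rpos m2 by (intro mult_left_mono) auto
  then have r23: "r < 2/3" using rm by simp
  have "2 / r > 2 * (real m - 1/2)" using rm rpos by (simp add: field_simps)
  then have gm: "2 / r \<ge> real m" using m2 by simp
  define X0 where "X0 = nat \<lceil>2 / r\<rceil>"
  have X0ge: "real X0 \<ge> 2 / r" unfolding X0_def by linarith
  have "2 / r > 0" using rpos by simp
  then have "real X0 = of_int \<lceil>2 / r\<rceil>" unfolding X0_def by simp
  then have X0lt: "real X0 < 2 / r + 1" using ceiling_correct[of "2/r"] by linarith
  have X0m: "X0 \<ge> m" using X0ge gm unfolding X0_def by linarith
  define N where "N = X0 - m"
  have NX: "N + m = X0" using X0m by (simp add: N_def)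
  have split: "suminf c = (\<Sum>k. c (k + N)) + (\<Sum>k<N. c k)"
    by (rule suminf_split_initial_segment[OF sc])
  have head: "norm (\<Sum>k<N. c k) \<le> ln (real X0 - 1/2) - ln (real m - 1/2)"
  proof -
    have "norm (\<Sum>k<N. c k) \<le> (\<Sum>k<N. norm (c k))" by (rule norm_sum)
    also have "\<dots> \<le> (\<Sum>k<N. 1 / real (k + m))"
    proof (rule sum_mono)
      fix k assume "k \<in> {..<N}"
      have "norm z ^ k \<le> 1" using assms(2) by (intro power_le_one) auto
      moreover have "norm (c k) = norm z ^ k / real (k + m)"
        unfolding c_def by (simp only: norm_divide norm_power norm_of_nat)
      ultimately show "norm (c k) \<le> 1 / real (k + m)"
        by (simp add: divide_right_mono)
    qed
    also have "\<dots> \<le> ln (real (N + m) - 1/2) - ln (real m - 1/2)"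
      using m2 by (intro head_bound) auto
    finally show ?thesis using NX by simp
  qed
  have tail: "norm (\<Sum>k. c (k + N)) \<le> 2 / (r * real X0)"
  proof -
    have "(\<lambda>k. c (k + N)) = (\<lambda>k. z ^ N * (z ^ k / of_nat (k + X0)))"
      using NX by (auto simp: c_def power_add algebra_simps)
    then have "(\<Sum>k. c (k + N)) = z ^ N * (\<Sum>k. z ^ k / of_nat (k + X0))"
      using suminf_mult[OF summable_w[OF assms(2)]] by simp
    then have t1: "norm (\<Sum>k. c (k + N)) \<le> norm (\<Sum>k. z ^ k / of_nat (k + X0))"
      using assms(2) by (simp add: norm_mult norm_power mult_left_le_one_le power_le_one)
    have t2: "r * norm (\<Sum>k. z ^ k / of_nat (k + X0)) \<le> 2 / real X0"
      unfolding r_def using tail_bound[OF assms(2), of X0] X0m m2 by simp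
    have gen: "S \<le> 2 / (r * real X0)" if "r * S \<le> 2 / real X0" for S :: real
    proof -
      have "S \<le> (2 / real X0) / r" using rpos that by (subst pos_le_divide_eq) (auto simp: mult.commute)
      then show ?thesis by (metis divide_divide_eq_left mult.commute)
    qed
    show ?thesis using t1 gen[OF t2] by linarith
  qed
  have "norm (suminf c) \<le> ln (real X0 - 1/2) - ln (real m - 1/2) + 2 / (r * real X0)"
    using split head tail norm_triangle_ineq[of "\<Sum>k. c (k + N)" "\<Sum>k<N. c k"] by simp
  also have "\<dots> < - ln (r * (real m - 1/2)) + sqrt ((pi/2)^2 + 1)"
    using final_real[OF rpos rm _ X0ge X0lt] m2 by simp
  finally have F: "norm (suminf c) < - ln (r * (real m - 1/2)) + sqrt ((pi/2)^2 + 1)" .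
  have zm: "norm z ^ m > 0" using z0 by simp
  have "norm (\<Sum>k. z ^ (k + n + 1) / of_nat (k + n + 1)) = norm z ^ m * norm (suminf c)"
    unfolding Seq by (simp only: norm_mult norm_power)
  also have "\<dots> < norm z ^ m * (- ln (r * (real m - 1/2)) + sqrt ((pi/2)^2 + 1))"
    using F zm by (rule mult_strict_left_mono)
  also have "real m - 1/2 = real n + 1/2" by (simp add: m_def)
  finally show ?thesis by (simp add: m_def r_def)
qed

end
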